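(* Let $h:\mathbb{R}_{\geq0}\times\mathbb{R}^n\to\mathbb{R}_{\geq0}$ be continuous and $K\subset\mathbb{R}^n$ closed. Assume (i) for all $t\ge0$ and $x\in\mathbb{R}^n$, $h(t,x)=0$ if and only if $x\in K$; (ii) $t\mapsto h(t,x)$ is nonincreasing for each $x\in\mathbb{R}^n$. Then there exists a continuous $g:\mathbb{R}_{\geq0}\times\mathbb{R}^n\to\mathbb{R}_{\geq0}$ such that (1) $g$ is of class $\mathcal{C}^1$ on $\mathbb{R}_{\geq0}\times(\mathbb{R}^n\setminus K)$; (2) $\tfrac12 h(t,x)\le g(t,x)\le2h(t,x)$ for all $(t,x)\in\mathbb{R}_{\geq0}\times\mathbb{R}^n$; (3) $t\mapsto g(t,x)$ is nonincreasing for each $x\in\mathbb{R}^n$. *)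

theory Defs
  imports "HOL-Analysis.Analysis"
begin

end

theory Submission
  imports Defs "HOL-Analysis.Analysis"
begin


lemma series_C1:
  fixes f :: "nat \<Rightarrow> 'b::real_normed_vector \<Rightarrow> real"
  assumes cvx: "convex S"
    and der: "\<And>n x. x \<in> S \<Longrightarrow> (f n has_derivative f' n x) (at x within S)"
    and bnd: "\<And>n x. x \<in> S \<Longrightarrow> \<bar>f n x\<bar> \<le> m n"
    and bndD: "\<And>n x v. x \<in> S \<Longrightarrow> \<bar>f' n x v\<bar> \<le> m n * norm v"
    and sm: "summable m"
    and cont: "\<And>n v. continuous_on S (\<lambda>x. f' n x v)"
  shows "\<And>x. x \<in> S \<Longrightarrow> ((\<lambda>x. \<Sum>n. f n x) has_derivative (\<lambda>v. \<Sum>n. f' n x v)) (at x within S)"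
    and "\<And>v. continuous_on S (\<lambda>x. \<Sum>n. f' n x v)"
    and "\<And>x. x \<in> S \<Longrightarrow> summable (\<lambda>n. f n x)"
    and "\<And>x v. x \<in> S \<Longrightarrow> summable (\<lambda>n. f' n x v)"
proof -
  have m0: "m n \<ge> 0" if "x \<in> S" for n x using bnd[OF that, of n] by linarith
  have smf: "summable (\<lambda>n. f n x)" if "x \<in> S" for x
    by (rule summable_comparison_test[OF _ sm]) (use bnd[OF that] in auto)
  have smd: "summable (\<lambda>n. f' n x v)" if "x \<in> S" for x v
    by (rule summable_comparison_test[OF _ summable_mult2[OF sm, of "norm v"]]) (use bndD[OF that] in auto)
  show "summable (\<lambda>n. f n x)" if "x \<in> S" for x using smf that .
  show "summable (\<lambda>n. f' n x v)" if "x \<in> S" for x v using smd that .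
  show "continuous_on S (\<lambda>x. \<Sum>n. f' n x v)" for v
  proof (rule uniform_limit_theorem[OF _ Weierstrass_m_test[where M="\<lambda>n. m n * norm v"]])
    show "\<forall>\<^sub>F n in sequentially. continuous_on S (\<lambda>x. \<Sum>i<n. f' i x v)"
      by (intro always_eventually allI continuous_on_sum cont)
  qed (use bndD summable_mult2[OF sm] in auto)
  show "((\<lambda>x. \<Sum>n. f n x) has_derivative (\<lambda>v. \<Sum>n. f' n x v)) (at x within S)" if xS: "x \<in> S" for x
  proof -
    have "\<exists>g. \<forall>x\<in>S. (\<lambda>n. f n x) sums (g x) \<and> (g has_derivative (\<lambda>v. \<Sum>n. f' n x v)) (at x within S)"
    proof (rule has_derivative_series[OF cvx der _ xS])
      show "(\<lambda>n. f n x) sums (\<Sum>n. f n x)" using smf[OF xS] by (simp add: summable_sums)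
      fix e :: real assume e: "e > 0"
      obtain N where N: "\<And>n. n \<ge> N \<Longrightarrow> norm (\<Sum>i. m (i + n)) < e"
        using suminf_exist_split[OF e sm] by blast
      show "\<forall>\<^sub>F n in sequentially. \<forall>x\<in>S. \<forall>h. norm ((\<Sum>i<n. f' i x h) - (\<Sum>n. f' n x h)) \<le> e * norm h"
        unfolding eventually_sequentially
      proof (intro exI[of _ N] allI impI ballI)
        fix n x h assume nN: "N \<le> n" and x: "x \<in> S"
        have sh: "summable (\<lambda>i. m (i + n))" using sm by (simp add: summable_iff_shift)
        have "(\<Sum>i<n. f' i x h) - (\<Sum>n. f' n x h) = - (\<Sum>i. f' (i + n) x h)"
          using suminf_split_initial_segment[OF smd[OF x, of h], of n] by simp
        hence "norm ((\<Sum>i<n. f' i x h) - (\<Sum>n. f' n x h)) = \<bar>\<Sum>i. f' (i + n) x h\<bar>" by simp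
        also have "\<dots> \<le> (\<Sum>i. m (i + n) * norm h)"
        proof -
          have s2: "summable (\<lambda>i. m (i + n) * norm h)" using sh by (rule summable_mult2)
          have s1: "summable (\<lambda>i. norm (f' (i + n) x h))"
            by (rule summable_comparison_test[OF _ s2]) (use bndD[OF x] in auto)
          have "\<bar>\<Sum>i. f' (i + n) x h\<bar> \<le> (\<Sum>i. norm (f' (i + n) x h))"
            using summable_norm[OF s1] by simp
          also have "\<dots> \<le> (\<Sum>i. m (i + n) * norm h)"
            by (rule suminf_le[OF _ s1 s2]) (use bndD[OF x] in auto)
          finally show ?thesis .
        qed
        also have "\<dots> = (\<Sum>i. m (i + n)) * norm h" using sh by (simp add: suminf_mult2)
        also have "\<dots> \<le> e * norm h"
          using N[OF nN] by (intro mult_right_mono) auto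
        finally show "norm ((\<Sum>i<n. f' i x h) - (\<Sum>n. f' n x h)) \<le> e * norm h" .
      qed
    qed
    then obtain g where g: "\<forall>x\<in>S. (\<lambda>n. f n x) sums (g x) \<and> (g has_derivative (\<lambda>v. \<Sum>n. f' n x v)) (at x within S)" by blast
    have "(g has_derivative (\<lambda>v. \<Sum>n. f' n x v)) (at x within S)" using g xS by blast
    moreover have "\<And>y. y \<in> S \<Longrightarrow> g y = (\<Sum>n. f n y)" using g sums_unique by blast
    ultimately show ?thesis
      by (rule has_derivative_transform_within[OF _ zero_less_one xS]) auto
  qed
qed



definition rq :: "real \<Rightarrow> real" where "rq v = (max 0 v)^2"
definition rq' :: "real \<Rightarrow> real" where "rq' v = 2 * max 0 v"

lemma rq_deriv: "(rq has_real_derivative rq' v) (at v)"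
proof -
  consider "v < 0" | "v > 0" | "v = 0" by linarith
  then show ?thesis
  proof cases
    case 1
    have "eventually (\<lambda>x. x \<in> {..<0}) (nhds v)" using 1 by (intro eventually_nhds_in_open) auto
    hence ev: "eventually (\<lambda>x. rq x = 0) (nhds v)" by eventually_elim (auto simp: rq_def)
    have "((\<lambda>x. 0) has_real_derivative 0) (at v)" by (rule DERIV_const)
    thus ?thesis using 1 by (subst DERIV_cong_ev[OF refl ev]) (auto simp: rq'_def)
  next
    case 2
    have "eventually (\<lambda>x. x \<in> {0<..}) (nhds v)" using 2 by (intro eventually_nhds_in_open) auto
    hence ev: "eventually (\<lambda>x. rq x = x^2) (nhds v)" by eventually_elim (auto simp: rq_def)
    have "((\<lambda>x. x^2) has_real_derivative 2 * v) (at v)"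
      by (rule derivative_eq_intros refl | simp)+
    thus ?thesis using 2 by (subst DERIV_cong_ev[OF refl ev]) (auto simp: rq'_def)
  next
    case 3
    show ?thesis unfolding has_field_derivative_iff 3
    proof (rule tendsto_sandwich[where f="\<lambda>y. - \<bar>y\<bar>" and h="\<lambda>y. \<bar>y\<bar>"])
      show "\<forall>\<^sub>F y in at 0. - \<bar>y\<bar> \<le> (rq y - rq 0) / (y - 0)"
        by (intro always_eventually) (auto simp: rq_def max_def power2_eq_square divide_simps)
      show "\<forall>\<^sub>F y in at 0. (rq y - rq 0) / (y - 0) \<le> \<bar>y\<bar>"
        by (intro always_eventually) (auto simp: rq_def max_def power2_eq_square divide_simps)
      have "((\<lambda>y::real. \<bar>y\<bar>) \<longlongrightarrow> \<bar>0\<bar>) (at 0)" by (intro tendsto_intros)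
      thus "((\<lambda>y::real. \<bar>y\<bar>) \<longlongrightarrow> rq' 0) (at 0)" by (simp add: rq'_def)
      have "((\<lambda>y::real. -\<bar>y\<bar>) \<longlongrightarrow> -\<bar>0\<bar>) (at 0)" by (intro tendsto_intros)
      thus "((\<lambda>y::real. -\<bar>y\<bar>) \<longlongrightarrow> rq' 0) (at 0)" by (simp add: rq'_def)
    qed
  qed
qed

lemma rq_cont: "continuous_on S rq'" "continuous_on S rq"
  unfolding rq'_def rq_def by (intro continuous_intros)+

lemma rq_nonneg: "rq v \<ge> 0" "rq' v \<ge> 0" by (auto simp: rq_def rq'_def)
lemma rq_mono: "u \<le> v \<Longrightarrow> rq u \<le> rq v"
  unfolding rq_def by (intro power_mono) auto
lemma rq_zero: "v \<le> 0 \<Longrightarrow> rq v = 0" "v \<le> 0 \<Longrightarrow> rq' v = 0" by (auto simp: rq_def rq'_def)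
lemma rq_pos: "v > 0 \<Longrightarrow> rq v > 0" by (auto simp: rq_def)

definition ss :: "real \<Rightarrow> real" where
  "ss u = rq (3*u - 1) / (rq (3*u - 1) + rq (2 - 3*u))"
definition ss' :: "real \<Rightarrow> real" where
  "ss' u = (3 * rq' (3*u - 1) * (rq (3*u - 1) + rq (2 - 3*u)) - rq (3*u - 1) * (3 * rq' (3*u - 1) - 3 * rq' (2 - 3*u)))
       / (rq (3*u - 1) + rq (2 - 3*u))^2"

lemma ss_den: "rq (3*u - 1) + rq (2 - 3*u) > 0"
proof (cases "3*u - 1 > 0")
  case True thus ?thesis using rq_pos[OF True] rq_nonneg[of "2-3*u"] by linarith
next
  case False hence "2 - 3*u > 0" by linarith
  thus ?thesis using rq_pos[of "2-3*u"] rq_nonneg[of "3*u-1"] by linarith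
qed

lemma ss_deriv: "(ss has_real_derivative ss' u) (at u)"
proof -
  have d1: "((\<lambda>u. rq (3*u - 1)) has_real_derivative rq' (3*u-1) * 3) (at u)"
    by (rule DERIV_chain2[OF rq_deriv]) (rule derivative_eq_intros refl | simp)+
  have d2: "((\<lambda>u. rq (2 - 3*u)) has_real_derivative rq' (2 - 3*u) * (-3)) (at u)"
    by (rule DERIV_chain2[OF rq_deriv]) (rule derivative_eq_intros refl | simp)+
  have "((\<lambda>u. rq (3*u - 1) / (rq (3*u - 1) + rq (2 - 3*u))) has_real_derivative
     ((rq' (3*u-1) * 3) * (rq (3*u - 1) + rq (2 - 3*u)) - rq (3*u - 1) * (rq' (3*u-1) * 3 + rq' (2 - 3*u) * (-3)))
      / ((rq (3*u - 1) + rq (2 - 3*u)) * (rq (3*u - 1) + rq (2 - 3*u)))) (at u)"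
    by (rule DERIV_divide[OF d1 DERIV_add[OF d1 d2]]) (use ss_den[of u] in auto)
  thus ?thesis unfolding ss_def ss'_def by (simp add: power2_eq_square algebra_simps)
qed

lemma ss_cont: "continuous_on S ss'" "continuous_on S ss"
proof -
  have "\<And>u. rq (3*u - 1) + rq (2 - 3*u) \<noteq> 0" using ss_den by (metis less_irrefl)
  thus "continuous_on S ss'" "continuous_on S ss"
    unfolding ss'_def ss_def rq_def rq'_def by (auto intro!: continuous_intros simp: power2_eq_square rq_def)
qed

lemma ss_low: "u \<le> 1/3 \<Longrightarrow> ss u = 0 \<and> ss' u = 0"
  by (auto simp: ss_def ss'_def rq_zero)
lemma ss_high: "u \<ge> 2/3 \<Longrightarrow> ss u = 1 \<and> ss' u = 0"
  using ss_den[of u] by (auto simp: ss_def ss'_def rq_zero)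
lemma ss_range: "0 \<le> ss u" "ss u \<le> 1"
  using ss_den[of u] rq_nonneg by (auto simp: ss_def divide_simps)
lemma ss_mono: assumes "u \<le> v" shows "ss u \<le> ss v"
proof -
  have "rq (3*u - 1) \<le> rq (3* v - 1)" "rq (2 - 3* v) \<le> rq (2 - 3*u)" using assms by (auto intro: rq_mono)
  moreover have "rq (3*u - 1) \<ge> 0" "rq (2 - 3* v) \<ge> 0" by (auto intro: rq_nonneg)
  ultimately have "rq (3*u - 1) * rq (2 - 3* v) \<le> rq (3* v - 1) * rq (2 - 3*u)" by (intro mult_mono) auto
  hence "rq (3*u - 1) * (rq (3* v - 1) + rq (2 - 3* v)) \<le> rq (3* v - 1) * (rq (3*u - 1) + rq (2 - 3*u))" by (simp add: algebra_simps)
  thus ?thesis using ss_den[of u] ss_den[of v] unfolding ss_def by (simp add: divide_simps mult.commute)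
qed



definition bump :: "'a::real_inner \<Rightarrow> real \<Rightarrow> 'a \<Rightarrow> real" where
  "bump y \<rho> x = rq (1 - (norm (x - y))^2 / \<rho>^2)"
definition bump' :: "'a::real_inner \<Rightarrow> real \<Rightarrow> 'a \<Rightarrow> 'a \<Rightarrow> real" where
  "bump' y \<rho> x u = rq' (1 - (norm (x - y))^2 / \<rho>^2) * (- (2 * ((x - y) \<bullet> u)) / \<rho>^2)"

lemma bump_deriv: "(bump y \<rho> has_derivative bump' y \<rho> x) (at x within S)"
proof -
  have d: "((\<lambda>x. x - y) has_derivative (\<lambda>h. h)) (at x within S)"
    using has_derivative_diff[OF has_derivative_ident has_derivative_const[of y]] by simp
  have dd: "((\<lambda>x. (x - y) \<bullet> (x - y)) has_derivative (\<lambda>u. (x - y) \<bullet> u + u \<bullet> (x - y))) (at x within S)"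
    by (rule has_derivative_inner[OF d d])
  have e: "((\<lambda>x. 1 - (1/\<rho>^2) * ((x - y) \<bullet> (x - y))) has_derivative (\<lambda>u. 0 - (1/\<rho>^2) * ((x - y) \<bullet> u + u \<bullet> (x - y)))) (at x within S)"
    by (intro has_derivative_diff has_derivative_const has_derivative_mult_right dd)
  have c: "((\<lambda>x. rq (1 - (1/\<rho>^2) * ((x - y) \<bullet> (x - y)))) has_derivative
      (\<lambda>u. rq' (1 - (1/\<rho>^2) * ((x - y) \<bullet> (x - y))) * (0 - (1/\<rho>^2) * ((x - y) \<bullet> u + u \<bullet> (x - y))))) (at x within S)"
    using has_derivative_compose[OF e rq_deriv[unfolded has_field_derivative_def]] by simp
  have eq1: "bump y \<rho> = (\<lambda>x. rq (1 - (1/\<rho>^2) * ((x - y) \<bullet> (x - y))))"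
    by (rule ext) (simp add: bump_def power2_norm_eq_inner)
  have eq2: "bump' y \<rho> x = (\<lambda>u. rq' (1 - (1/\<rho>^2) * ((x - y) \<bullet> (x - y))) * (0 - (1/\<rho>^2) * ((x - y) \<bullet> u + u \<bullet> (x - y))))"
    by (rule ext) (simp add: bump'_def power2_norm_eq_inner inner_commute)
  show ?thesis unfolding eq1 eq2 by (rule c)
qed

lemma bump_cont: "continuous_on S (\<lambda>x. bump' y \<rho> x u)" "continuous_on S (bump y \<rho>)"
proof -
  have c: "continuous_on S (\<lambda>x. 1 - (norm (x - y))^2 / \<rho>^2)" by (cases "\<rho>=0") (auto intro!: continuous_intros)
  have c2: "continuous_on S (\<lambda>x. (- (2 * ((x - y) \<bullet> u)) / \<rho>^2))" by (cases "\<rho>=0") (auto intro!: continuous_intros)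
  show "continuous_on S (bump y \<rho>)" using continuous_on_compose2[OF rq_cont(2) c] unfolding bump_def by auto
  show "continuous_on S (\<lambda>x. bump' y \<rho> x u)" using continuous_on_mult[OF continuous_on_compose2[OF rq_cont(1) c] c2] unfolding bump'_def by auto
qed

lemma bump_range: "0 \<le> bump y \<rho> x" "\<rho> > 0 \<Longrightarrow> bump y \<rho> x \<le> 1"
proof -
  show "0 \<le> bump y \<rho> x" by (simp add: bump_def rq_nonneg)
  assume "\<rho> > 0"
  have "0 \<le> (norm (x - y))^2 / \<rho>^2" by simp
  hence "max 0 (1 - (norm (x - y))^2 / \<rho>^2) \<le> 1" by simp
  hence "(max 0 (1 - (norm (x - y))^2 / \<rho>^2))^2 \<le> 1"
    by (intro power_le_one) auto
  thus "bump y \<rho> x \<le> 1" by (simp add: bump_def rq_def)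
qed

lemma bump_supp: assumes "\<rho> > 0" "bump y \<rho> x \<noteq> 0" shows "dist x y < \<rho>"
proof (rule ccontr)
  assume "\<not> dist x y < \<rho>"
  hence "\<rho> \<le> norm (x - y)" by (simp add: dist_norm)
  hence "\<rho>^2 \<le> (norm (x - y))^2" using assms(1) by (intro power_mono) auto
  hence "1 - (norm (x - y))^2 / \<rho>^2 \<le> 0" using assms(1) by (simp add: field_simps)
  thus False using assms(2) by (simp add: bump_def rq_zero)
qed

lemma bump_pos: assumes "\<rho> > 0" "dist x y < \<rho>" shows "bump y \<rho> x > 0"
proof -
  have "norm (x - y) < \<rho>" using assms by (simp add: dist_norm)
  hence "(norm (x - y))^2 < \<rho>^2" by (intro power_strict_mono) auto
  hence "1 - (norm (x - y))^2 / \<rho>^2 > 0" using assms(1) by (simp add: field_simps)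
  thus ?thesis by (simp add: bump_def rq_pos)
qed

lemma bump'_bound: assumes "\<rho> > 0" shows "\<bar>bump' y \<rho> x u\<bar> \<le> 4 / \<rho> * norm u"
proof (cases "norm (x - y) < \<rho>")
  case False
  hence "\<rho>^2 \<le> (norm (x - y))^2" using assms(1) by (intro power_mono) auto
  hence "1 - (norm (x - y))^2 / \<rho>^2 \<le> 0" using assms(1) by (simp add: field_simps)
  thus ?thesis using assms by (simp add: bump'_def rq_zero)
next
  case True
  have r: "0 \<le> rq' (1 - (norm (x - y))^2 / \<rho>^2)" "rq' (1 - (norm (x - y))^2 / \<rho>^2) \<le> 2"
    by (auto simp: rq'_def)
  have "\<bar>(x - y) \<bullet> u\<bar> \<le> norm (x - y) * norm u" by (rule Cauchy_Schwarz_ineq2)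
  also have "\<dots> \<le> \<rho> * norm u" using True by (intro mult_right_mono) auto
  finally have cs: "\<bar>(x - y) \<bullet> u\<bar> \<le> \<rho> * norm u" .
  have "\<bar>bump' y \<rho> x u\<bar> = rq' (1 - (norm (x - y))^2 / \<rho>^2) * (2 * \<bar>(x - y) \<bullet> u\<bar> / \<rho>^2)"
    using r by (simp add: bump'_def abs_mult)
  also have "\<dots> \<le> 2 * (2 * (\<rho> * norm u) / \<rho>^2)"
    using r cs assms by (intro mult_mono divide_right_mono) auto
  also have "\<dots> = 4 / \<rho> * norm u" using assms by (simp add: power2_eq_square field_simps)
  finally show ?thesis .
qed



lemma time_avg:
  fixes f :: "real \<Rightarrow> real"
  assumes cont: "continuous_on {0..} f" and mono: "\<And>s t. 0 \<le> s \<Longrightarrow> s \<le> t \<Longrightarrow> f t \<le> f s"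
    and e: "e > 0" and a: "a \<ge> 0"
  shows "\<exists>c c'. (\<forall>t. t \<ge> 0 \<longrightarrow> (c has_real_derivative c' t) (at t)) \<and> continuous_on {0..} c'
     \<and> (\<forall>t. t \<ge> 0 \<longrightarrow> c' t \<le> 0) \<and> (\<forall>t\<in>{a..a+2}. \<bar>c t - f t\<bar> \<le> e)"
proof -
  define fe where "fe s = f (max 0 s)" for s
  have fec: "continuous_on UNIV fe"
    unfolding fe_def by (rule continuous_on_compose2[OF cont]) (auto intro!: continuous_intros)
  have femono: "fe t \<le> fe s" if "s \<le> t" for s t
    unfolding fe_def by (rule mono) (use that in auto)
  have "uniformly_continuous_on {a..a+3} f"
    by (rule compact_uniformly_continuous) (use continuous_on_subset[OF cont] a in auto)
  then obtain d where d: "d > 0" and dd: "\<And>x x'. x \<in> {a..a+3} \<Longrightarrow> x' \<in> {a..a+3} \<Longrightarrow> dist x' x < d \<Longrightarrow> dist (f x') (f x) < e"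
    unfolding uniformly_continuous_on_def using e by metis
  define \<delta> where "\<delta> = min 1 (d/2)"
  have \<delta>: "\<delta> > 0" "\<delta> \<le> 1" "\<delta> < d" using d by (auto simp: \<delta>_def)
  define F where "F u = integral {-1..u} fe" for u
  have Fd: "(F has_real_derivative fe u) (at u)" if "u > -1" for u
  proof -
    have "(F has_real_derivative fe u) (at u within {-1..u+1})"
      unfolding F_def by (rule integral_has_real_derivative[OF continuous_on_subset[OF fec subset_UNIV]]) (use that in simp)
    moreover have "u \<in> interior {-1..u+1}" using that by (simp add: interior_atLeastAtMost_real)
    hence "at u within {-1..u+1} = at u" by (rule at_within_interior)
    ultimately show ?thesis by simp
  qed
  define c where "c t = (F (t + \<delta>) - F t) / \<delta>" for t
  define c' where "c' t = (fe (t + \<delta>) - fe t) / \<delta>" for t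
  have cd: "(c has_real_derivative c' t) (at t)" if "t \<ge> 0" for t
  proof -
    have "((\<lambda>t. F (t + \<delta>)) has_real_derivative fe (t + \<delta>) * 1) (at t)"
      by (rule DERIV_chain2[OF Fd]) (use that \<delta> in \<open>auto intro!: derivative_eq_intros\<close>)
    from DERIV_cdivide[OF DERIV_diff[OF this Fd], of "\<delta>"] that
    show ?thesis unfolding c_def c'_def by auto
  qed
  have c'c: "continuous_on {0..} c'"
  proof -
    have "continuous_on UNIV (\<lambda>t. fe (t + \<delta>))" by (rule continuous_on_compose2[OF fec]) (auto intro!: continuous_intros)
    hence "continuous_on UNIV c'" unfolding c'_def using fec \<delta> by (intro continuous_intros) auto
    thus ?thesis by (rule continuous_on_subset) auto
  qed
  have c'n: "c' t \<le> 0" for t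
    unfolding c'_def using femono[of t "t + \<delta>"] \<delta> by (simp add: divide_nonpos_pos)
  have approx: "\<bar>c t - f t\<bar> \<le> e" if t: "t \<in> {a..a+2}" for t
  proof -
    have int: "fe integrable_on {-1..t+\<delta>}" by (rule integrable_continuous_real) (rule continuous_on_subset[OF fec subset_UNIV])
    have "F t + integral {t..t+\<delta>} fe = F (t + \<delta>)"
      unfolding F_def using Henstock_Kurzweil_Integration.integral_combine[where a="-1" and c=t and b="t+\<delta>" and f=fe] t a \<delta> int by simp
    hence "c t = integral {t..t+\<delta>} fe / \<delta>" unfolding c_def by simp
    moreover have "integral {t..t+\<delta>} (\<lambda>s. fe s - f t) = integral {t..t+\<delta>} fe - \<delta> * f t"
    proof -
      have "fe integrable_on {t..t+\<delta>}" by (rule integrable_continuous_real) (rule continuous_on_subset[OF fec subset_UNIV])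
      thus ?thesis using \<delta> by (subst integral_diff) auto
    qed
    moreover have "norm (integral {t..t+\<delta>} (\<lambda>s. fe s - f t)) \<le> e * ((t+\<delta>) - t)"
    proof (rule integral_bound)
      show "continuous_on {t..t + \<delta>} (\<lambda>s. fe s - f t)" by (intro continuous_intros continuous_on_subset[OF fec subset_UNIV])
      fix s assume s: "s \<in> {t..t+\<delta>}"
      hence "fe s = f s" using t a by (auto simp: fe_def)
      moreover have "dist (f s) (f t) < e" using s t \<delta> by (intro dd) (auto simp: dist_real_def)
      ultimately show "norm (fe s - f t) \<le> e" by (simp add: dist_real_def)
    qed (use \<delta> in auto)
    ultimately have "\<bar>c t * \<delta> - f t * \<delta>\<bar> \<le> e * \<delta>" using \<delta> by (simp add: algebra_simps)
    hence "\<bar>c t - f t\<bar> * \<delta> \<le> e * \<delta>" by (simp add: left_diff_distrib[symmetric] abs_mult \<delta>(1) less_imp_le)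
    thus ?thesis using \<delta> by simp
  qed
  show ?thesis by (intro exI[of _ c] exI[of _ c'] conjI allI impI ballI cd c'c c'n approx)
qed



lemma cont_bound: "continuous_on {a..b} (g::real \<Rightarrow> real) \<Longrightarrow> \<exists>M. \<forall>t\<in>{a..b}. \<bar>g t\<bar> \<le> M"
proof -
  assume "continuous_on {a..b} g"
  hence "compact (g ` {a..b})" by (rule compact_continuous_image) simp
  hence "bounded (g ` {a..b})" by (rule compact_imp_bounded)
  then obtain M where "\<forall>x\<in>g ` {a..b}. norm x \<le> M" unfolding bounded_iff by blast
  thus ?thesis by auto
qed

lemma spatial_radius:
  fixes \<phi> :: "real \<times> 'a::euclidean_space \<Rightarrow> real"
  assumes U: "open U" and \<phi>c: "continuous_on ({0..} \<times> U) \<phi>" and e: "e > 0" and a: "a \<ge> 0" and y: "y \<in> U"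
  shows "\<exists>\<rho>>0. ball y \<rho> \<subseteq> U \<and> (\<forall>x\<in>ball y \<rho>. \<forall>t\<in>{a..a+2}. \<bar>\<phi> (t, x) - \<phi> (t, y)\<bar> \<le> e)"
proof -
  obtain r0 where r0: "r0 > 0" "cball y r0 \<subseteq> U" using open_contains_cball U y by blast
  have sub: "{a..a+2} \<times> cball y r0 \<subseteq> {0..} \<times> U" using r0 a by auto
  have "uniformly_continuous_on ({a..a+2} \<times> cball y r0) \<phi>"
    by (rule compact_uniformly_continuous[OF continuous_on_subset[OF \<phi>c sub]]) (intro compact_Times compact_Icc compact_cball)
  then obtain d where d: "d > 0" and dd: "\<And>p q. p \<in> {a..a+2} \<times> cball y r0 \<Longrightarrow> q \<in> {a..a+2} \<times> cball y r0 \<Longrightarrow> dist q p < d \<Longrightarrow> dist (\<phi> q) (\<phi> p) < e"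
    unfolding uniformly_continuous_on_def using e by metis
  define \<rho> where "\<rho> = min r0 d"
  have "\<rho> > 0" using r0 d by (simp add: \<rho>_def)
  moreover have "ball y \<rho> \<subseteq> U" using r0 by (auto simp: \<rho>_def)
  moreover have "\<bar>\<phi> (t, x) - \<phi> (t, y)\<bar> \<le> e" if x: "x \<in> ball y \<rho>" and t: "t \<in> {a..a+2}" for x t
  proof -
    have "dist (t, x) (t, y) = dist x y" by (simp add: dist_Pair_Pair)
    also have "\<dots> < d" using x by (auto simp: \<rho>_def dist_commute)
    finally have "dist (\<phi> (t, x)) (\<phi> (t, y)) < e"
      using x t r0 by (intro dd) (auto simp: \<rho>_def dist_commute)
    thus ?thesis by (simp add: dist_real_def)
  qed
  ultimately show ?thesis by blast
qed



lemma aux2: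
  assumes "0 \<le> q" "0 \<le> (m::real)"
  shows "m * (q + 1) \<le> (1 + m) * (1 + q)" "q \<le> (1 + m) * (1 + q)" "m \<le> (1 + m) * (1 + q)"
proof -
  have e1: "(1 + m) * (1 + q) = 1 + q + m + m * q" by (simp add: algebra_simps)
  have e2: "m * (q + 1) = m * q + m" by (simp add: algebra_simps)
  have mq: "m * q \<ge> 0" using assms by simp
  show "m * (q + 1) \<le> (1 + m) * (1 + q)" unfolding e1 e2 using mq assms by linarith
  show "q \<le> (1 + m) * (1 + q)" unfolding e1 using mq assms by linarith
  show "m \<le> (1 + m) * (1 + q)" unfolding e1 using mq assms by linarith
qed

lemma layer:
  fixes \<phi> :: "real \<times> 'a::euclidean_space \<Rightarrow> real"
  assumes U: "open U" "U \<noteq> {}"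
    and \<phi>c: "continuous_on ({0..} \<times> U) \<phi>"
    and \<phi>m: "\<And>x s t. x \<in> U \<Longrightarrow> 0 \<le> s \<Longrightarrow> s \<le> t \<Longrightarrow> \<phi> (t, x) \<le> \<phi> (s, x)"
    and e: "e > 0" and a: "a \<ge> 0"
  shows "\<exists>\<Phi> \<Phi>'. (\<forall>p \<in> {0..a+3} \<times> U. (\<Phi> has_derivative \<Phi>' p) (at p within {0..a+3} \<times> U))
     \<and> (\<forall>v. continuous_on ({0..a+3} \<times> U) (\<lambda>p. \<Phi>' p v))
     \<and> (\<forall>x\<in>U. \<forall>s t. 0 \<le> s \<longrightarrow> s \<le> t \<longrightarrow> t \<le> a+3 \<longrightarrow> \<Phi> (t, x) \<le> \<Phi> (s, x))
     \<and> (\<forall>x\<in>U. \<forall>t\<in>{a..a+2}. \<bar>\<Phi> (t, x) - \<phi> (t, x)\<bar> \<le> e)"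
proof -
  have e2: "e/2 > 0" using e by simp
  have "\<forall>y\<in>U. \<exists>\<rho>>0. ball y \<rho> \<subseteq> U \<and> (\<forall>x\<in>ball y \<rho>. \<forall>t\<in>{a..a+2}. \<bar>\<phi> (t, x) - \<phi> (t, y)\<bar> \<le> e/2)"
    using spatial_radius[OF U(1) \<phi>c e2 a] by blast
  then obtain \<rho> where \<rho>: "\<And>y. y \<in> U \<Longrightarrow> \<rho> y > 0" "\<And>y. y \<in> U \<Longrightarrow> ball y (\<rho> y) \<subseteq> U"
    and \<rho>\<phi>: "\<And>y x t. y \<in> U \<Longrightarrow> x \<in> ball y (\<rho> y) \<Longrightarrow> t \<in> {a..a+2} \<Longrightarrow> \<bar>\<phi> (t, x) - \<phi> (t, y)\<bar> \<le> e/2"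
    by metis
  obtain \<F>' where F': "\<F>' \<subseteq> (\<lambda>y. ball y (\<rho> y)) ` U" "countable \<F>'" "\<Union>\<F>' = \<Union>((\<lambda>y. ball y (\<rho> y)) ` U)"
    using Lindelof[of "(\<lambda>y. ball y (\<rho> y)) ` U"] by auto
  then obtain Y where Y: "countable Y" "Y \<subseteq> U" "\<F>' = (\<lambda>y. ball y (\<rho> y)) ` Y"
    using countable_subset_image[of \<F>' "\<lambda>y. ball y (\<rho> y)" U] by blast
  have UY: "U = (\<Union>y\<in>Y. ball y (\<rho> y))"
  proof
    show "U \<subseteq> (\<Union>y\<in>Y. ball y (\<rho> y))"
    proof
      fix x assume "x \<in> U"
      hence "x \<in> \<Union>((\<lambda>y. ball y (\<rho> y)) ` U)" using \<rho>(1) by force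
      thus "x \<in> (\<Union>y\<in>Y. ball y (\<rho> y))" using F'(3) Y(3) by simp
    qed
    show "(\<Union>y\<in>Y. ball y (\<rho> y)) \<subseteq> U" using \<rho>(2) Y(2) by blast
  qed
  have Yne: "Y \<noteq> {}" using UY U(2) by auto
  define yi where "yi i = from_nat_into Y i" for i
  have yiU: "yi i \<in> U" for i using from_nat_into[OF Yne] Y(2) by (auto simp: yi_def)
  have cover: "\<exists>i. x \<in> ball (yi i) (\<rho> (yi i))" if xU: "x \<in> U" for x
  proof -
    obtain y where "y \<in> Y" "x \<in> ball y (\<rho> y)" using UY xU by blast
    moreover have "y \<in> range yi" using range_from_nat_into[OF Yne Y(1)] \<open>y \<in> Y\<close> by (simp add: yi_def)
    ultimately show ?thesis by auto
  qed
  define r where "r i = \<rho> (yi i)" for i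
  have r0: "r i > 0" for i using \<rho>(1)[OF yiU] by (simp add: r_def)
  have "\<forall>i. \<exists>c c'. (\<forall>t. t \<ge> 0 \<longrightarrow> (c has_real_derivative c' t) (at t)) \<and> continuous_on {0..} c'
     \<and> (\<forall>t. t \<ge> 0 \<longrightarrow> c' t \<le> 0) \<and> (\<forall>t\<in>{a..a+2}. \<bar>c t - \<phi> (t, yi i)\<bar> \<le> e/2)"
  proof
    fix i
    show "\<exists>c c'. (\<forall>t. t \<ge> 0 \<longrightarrow> (c has_real_derivative c' t) (at t)) \<and> continuous_on {0..} c'
     \<and> (\<forall>t. t \<ge> 0 \<longrightarrow> c' t \<le> 0) \<and> (\<forall>t\<in>{a..a+2}. \<bar>c t - \<phi> (t, yi i)\<bar> \<le> e/2)"
    proof (rule time_avg[OF _ _ e2 a])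
      show "continuous_on {0..} (\<lambda>t. \<phi> (t, yi i))"
        by (rule continuous_on_compose2[OF \<phi>c]) (use yiU in \<open>auto intro!: continuous_intros\<close>)
      show "\<And>s t. 0 \<le> s \<Longrightarrow> s \<le> t \<Longrightarrow> \<phi> (t, yi i) \<le> \<phi> (s, yi i)" using \<phi>m yiU by blast
    qed
  qed
  then obtain c c' where cd: "\<And>i t. t \<ge> 0 \<Longrightarrow> (c i has_real_derivative c' i t) (at t)"
    and c'c: "\<And>i. continuous_on {0..} (c' i)" and c'n: "\<And>i t. t \<ge> 0 \<Longrightarrow> c' i t \<le> 0"
    and capp: "\<And>i t. t \<in> {a..a+2} \<Longrightarrow> \<bar>c i t - \<phi> (t, yi i)\<bar> \<le> e/2"
    by metis
  have cc: "continuous_on {0..} (c i)" for i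
    by (rule continuous_at_imp_continuous_on) (use cd DERIV_continuous in blast)
  have cmono: "c i t \<le> c i s" if "0 \<le> s" "s \<le> t" for i s t
  proof (rule DERIV_nonpos_imp_nonincreasing[OF that(2)])
    fix x assume "s \<le> x" "x \<le> t"
    hence "x \<ge> 0" using that by simp
    thus "\<exists>y. (c i has_real_derivative y) (at x) \<and> y \<le> 0" using cd c'n by blast
  qed
  have "\<forall>i. \<exists>M. \<forall>t\<in>{0..a+3}. \<bar>c i t\<bar> \<le> M \<and> \<bar>c' i t\<bar> \<le> M"
  proof
    fix i
    obtain M1 where M1: "\<forall>t\<in>{0..a+3}. \<bar>c i t\<bar> \<le> M1" using cont_bound[OF continuous_on_subset[OF cc[of i]]] by force
    obtain M2 where M2: "\<forall>t\<in>{0..a+3}. \<bar>c' i t\<bar> \<le> M2" using cont_bound[OF continuous_on_subset[OF c'c[of i]]] by force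
    show "\<exists>M. \<forall>t\<in>{0..a+3}. \<bar>c i t\<bar> \<le> M \<and> \<bar>c' i t\<bar> \<le> M"
      by (rule exI[of _ "max M1 M2"]) (use M1 M2 in fastforce)
  qed
  then obtain M where M: "\<And>i t. t \<in> {0..a+3} \<Longrightarrow> \<bar>c i t\<bar> \<le> M i" "\<And>i t. t \<in> {0..a+3} \<Longrightarrow> \<bar>c' i t\<bar> \<le> M i"
    by metis
  have M0: "M i \<ge> 0" for i using M(1)[of 0 i] a by force
  define w where "w i = (1/2)^i / ((1 + M i) * (1 + 4 / r i))" for i
  have D0: "(1 + M i) * (1 + 4 / r i) > 0" for i
  proof -
    have "4 / r i > 0" using r0[of i] by simp
    hence "1 + 4 / r i > 0" by linarith
    moreover have "1 + M i > 0" using M0[of i] by linarith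
    ultimately show ?thesis by (rule mult_pos_pos[rotated])
  qed
  have w0: "w i > 0" for i using D0[of i] by (simp add: w_def)
  have aux: "q / D * X \<le> q" if "0 < D" "X \<le> D" "0 \<le> (q::real)" for q D X
  proof -
    have "q * X \<le> q * D" using that by (intro mult_left_mono) auto
    thus ?thesis using that by (simp add: field_simps)
  qed
  have wM: "w i * (M i * (4 / r i + 1)) \<le> (1/2)^i" "w i * (4 / r i) \<le> (1/2)^i" "w i * M i \<le> (1/2)^i" for i
  proof -
    have r4: "4 / r i \<ge> 0" using r0[of i] by simp
    have "M i * (4 / r i + 1) \<le> (1 + M i) * (1 + 4 / r i)" using aux2[OF r4 M0[of i]] by simp
    thus "w i * (M i * (4 / r i + 1)) \<le> (1/2)^i" unfolding w_def by (intro aux D0) auto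
    have "4 / r i \<le> (1 + M i) * (1 + 4 / r i)" using aux2[OF r4 M0[of i]] by simp
    thus "w i * (4 / r i) \<le> (1/2)^i" unfolding w_def by (intro aux D0) auto
    have "M i \<le> (1 + M i) * (1 + 4 / r i)" using aux2[OF r4 M0[of i]] by simp
    thus "w i * M i \<le> (1/2)^i" unfolding w_def by (intro aux D0) auto
  qed
  define S where "S = {0..a+3} \<times> (UNIV :: 'a set)"
  have Scvx: "convex S" unfolding S_def by (intro convex_Times convex_real_interval convex_UNIV)
  define fN where "fN i p = w i * (bump (yi i) (r i) (snd p) * c i (fst p))" for i p
  define fN' where "fN' i p v = w i * (bump (yi i) (r i) (snd p) * (c' i (fst p) * fst v) + bump' (yi i) (r i) (snd p) (snd v) * c i (fst p))" for i p v
  define fB where "fB i (p :: real \<times> 'a) = w i * bump (yi i) (r i) (snd p)" for i p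
  define fB' where "fB' i (p :: real \<times> 'a) (v :: real \<times> 'a) = w i * bump' (yi i) (r i) (snd p) (snd v)" for i p v
  have bd: "((\<lambda>p. bump (yi i) (r i) (snd p)) has_derivative (\<lambda>v. bump' (yi i) (r i) (snd p) (snd v))) (at p within T)" for i p and T :: "(real \<times> 'a) set"
    by (rule has_derivative_compose[OF has_derivative_snd[OF has_derivative_ident] bump_deriv])
  have cdd: "((\<lambda>p. c i (fst p)) has_derivative (\<lambda>v. c' i (fst p) * fst v)) (at p within T)" if "fst p \<ge> 0" for i p and T :: "(real \<times> 'a) set"
    using has_derivative_compose[OF has_derivative_fst[OF has_derivative_ident] cd[OF that, of i, unfolded has_field_derivative_def]] by simp
  have fNd: "(fN i has_derivative fN' i p) (at p within S)" if "p \<in> S" for i p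
  proof -
    have "fst p \<ge> 0" using that by (auto simp: S_def)
    from has_derivative_mult_right[OF has_derivative_mult[OF bd cdd[OF this]], of "w i"]
    show ?thesis unfolding fN_def[abs_def] fN'_def by simp
  qed
  have fBd: "(fB i has_derivative fB' i p) (at p within S)" if "p \<in> S" for i p
    using has_derivative_mult_right[OF bd, of "w i"] unfolding fB_def[abs_def] fB'_def by simp
  have bnd01: "0 \<le> bump (yi i) (r i) x" "bump (yi i) (r i) x \<le> 1" for i x using bump_range(1) bump_range(2)[OF r0[of i]] by auto
  have fNb: "\<bar>fN i p\<bar> \<le> (1/2)^i" if "p \<in> S" for i p
  proof -
    have t: "fst p \<in> {0..a+3}" using that by (auto simp: S_def)
    have "\<bar>fN i p\<bar> = w i * (bump (yi i) (r i) (snd p) * \<bar>c i (fst p)\<bar>)"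
      using w0[of i] bnd01 by (simp add: fN_def abs_mult)
    also have "\<dots> \<le> w i * (1 * M i)"
      using w0[of i] bnd01 M(1)[OF t] by (intro mult_left_mono mult_mono) auto
    also have "\<dots> \<le> (1/2)^i" using wM(3)[of i] by simp
    finally show ?thesis .
  qed
  have fN'b: "\<bar>fN' i p v\<bar> \<le> (1/2)^i * norm v" if "p \<in> S" for i p v
  proof -
    have t: "fst p \<in> {0..a+3}" using that by (auto simp: S_def)
    have "\<bar>fN' i p v\<bar> \<le> w i * (bump (yi i) (r i) (snd p) * (\<bar>c' i (fst p)\<bar> * \<bar>fst v\<bar>) + \<bar>bump' (yi i) (r i) (snd p) (snd v)\<bar> * \<bar>c i (fst p)\<bar>)"
    proof -
      have "\<bar>fN' i p v\<bar> = w i * \<bar>bump (yi i) (r i) (snd p) * (c' i (fst p) * fst v) + bump' (yi i) (r i) (snd p) (snd v) * c i (fst p)\<bar>"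
        using w0[of i] by (simp add: fN'_def abs_mult)
      also have "\<dots> \<le> w i * (\<bar>bump (yi i) (r i) (snd p) * (c' i (fst p) * fst v)\<bar> + \<bar>bump' (yi i) (r i) (snd p) (snd v) * c i (fst p)\<bar>)"
        using w0[of i] by (intro mult_left_mono abs_triangle_ineq) auto
      also have "\<dots> = w i * (bump (yi i) (r i) (snd p) * (\<bar>c' i (fst p)\<bar> * \<bar>fst v\<bar>) + \<bar>bump' (yi i) (r i) (snd p) (snd v)\<bar> * \<bar>c i (fst p)\<bar>)"
        using bnd01(1)[of i "snd p"] by (simp add: abs_mult)
      finally show ?thesis .
    qed
    also have "\<dots> \<le> w i * (1 * (M i * norm v) + (4 / r i * norm v) * M i)"
    proof -
      have fv: "\<bar>fst v\<bar> \<le> norm v" using norm_fst_le[of "fst v" "snd v"] by simp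
      have h1: "\<bar>c' i (fst p)\<bar> * \<bar>fst v\<bar> \<le> M i * norm v"
        by (rule mult_mono[OF M(2)[OF t] fv M0]) simp
      have h1': "bump (yi i) (r i) (snd p) * (\<bar>c' i (fst p)\<bar> * \<bar>fst v\<bar>) \<le> 1 * (M i * norm v)"
        by (rule mult_mono[OF bnd01(2) h1]) (use M0[of i] in auto)
      have "norm (snd v) \<le> norm v" using norm_snd_le[of "snd v" "fst v"] by simp
      hence "4 / r i * norm (snd v) \<le> 4 / r i * norm v" using r0[of i] by (intro mult_left_mono) auto
      hence b': "\<bar>bump' (yi i) (r i) (snd p) (snd v)\<bar> \<le> 4 / r i * norm v"
        using bump'_bound[OF r0[of i], of "yi i" "snd p" "snd v"] by linarith
      have h2: "\<bar>bump' (yi i) (r i) (snd p) (snd v)\<bar> * \<bar>c i (fst p)\<bar> \<le> (4 / r i * norm v) * M i"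
        by (rule mult_mono[OF b' M(1)[OF t]]) (use r0[of i] in auto)
      show ?thesis using w0[of i] by (intro mult_left_mono add_mono h1' h2) auto
    qed
    also have "\<dots> = (w i * (M i * (4 / r i + 1))) * norm v" by (simp add: algebra_simps)
    also have "\<dots> \<le> (1/2)^i * norm v" using wM(1)[of i] by (intro mult_right_mono) auto
    finally show ?thesis .
  qed
  have fBb: "\<bar>fB i p\<bar> \<le> (1/2)^i" for i p
  proof -
    have r4: "4 / r i \<ge> 0" using r0[of i] by simp
    have D1: "1 \<le> (1 + M i) * (1 + 4 / r i)"
    proof -
      have "(1 + M i) * (1 + q) = 1 + q + M i + M i * q" for q by (simp add: algebra_simps)
      moreover have "M i * (4 / r i) \<ge> 0" using M0[of i] r4 by simp
      ultimately show ?thesis using M0[of i] r4 by (metis add_increasing2 add.assoc le_add_same_cancel1)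
    qed
    have "\<bar>fB i p\<bar> \<le> w i * 1" using w0[of i] bnd01[of i "snd p"] by (simp add: fB_def abs_mult)
    also have "\<dots> \<le> w i * ((1 + M i) * (1 + 4 / r i))" using w0[of i] D1 by (intro mult_left_mono) auto
    also have "\<dots> = (1/2)^i"
    proof -
      have g: "\<And>D x. D \<noteq> 0 \<Longrightarrow> x / D * D = (x::real)" by simp
      have "(1 + M i) * (1 + 4 / r i) \<noteq> 0" using D0[of i] by linarith
      from g[OF this] show ?thesis unfolding w_def .
    qed
    finally show ?thesis .
  qed
  have fB'b: "\<bar>fB' i p v\<bar> \<le> (1/2)^i * norm v" for i p v
  proof -
    have "norm (snd v) \<le> norm v" using norm_snd_le[of "snd v" "fst v"] by simp
    hence "4 / r i * norm (snd v) \<le> 4 / r i * norm v" using r0[of i] by (intro mult_left_mono) auto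
    hence b': "\<bar>bump' (yi i) (r i) (snd p) (snd v)\<bar> \<le> 4 / r i * norm v"
      using bump'_bound[OF r0[of i], of "yi i" "snd p" "snd v"] by linarith
    have "\<bar>fB' i p v\<bar> = w i * \<bar>bump' (yi i) (r i) (snd p) (snd v)\<bar>" using w0[of i] by (simp add: fB'_def abs_mult)
    also have "\<dots> \<le> w i * (4 / r i * norm v)" using w0[of i] b' by (intro mult_left_mono) auto
    also have "\<dots> = w i * (4 / r i) * norm v" by simp
    also have "\<dots> \<le> (1/2)^i * norm v" using wM(2)[of i] by (intro mult_right_mono) auto
    finally show ?thesis .
  qed
  have fN'c: "continuous_on S (\<lambda>p. fN' i p v)" for i v
  proof -
    have f: "fst ` S \<subseteq> {0..}" by (auto simp: S_def)
    have c1: "continuous_on S (\<lambda>p. c i (fst p))" by (rule continuous_on_compose2[OF cc _ f]) (intro continuous_intros)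
    have c2: "continuous_on S (\<lambda>p. c' i (fst p))" by (rule continuous_on_compose2[OF c'c _ f]) (intro continuous_intros)
    have c3: "continuous_on S (\<lambda>p. bump (yi i) (r i) (snd p))" by (rule continuous_on_compose2[OF bump_cont(2)]) (auto intro!: continuous_intros)
    have c4: "continuous_on S (\<lambda>p. bump' (yi i) (r i) (snd p) (snd v))" by (rule continuous_on_compose2[OF bump_cont(1)]) (auto intro!: continuous_intros)
    show ?thesis unfolding fN'_def by (intro continuous_intros c1 c2 c3 c4)
  qed
  have fB'c: "continuous_on S (\<lambda>p. fB' i p v)" for i v
  proof -
    have c4: "continuous_on S (\<lambda>p. bump' (yi i) (r i) (snd p) (snd v))" by (rule continuous_on_compose2[OF bump_cont(1)]) (auto intro!: continuous_intros)
    show ?thesis unfolding fB'_def by (intro continuous_intros c4)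
  qed
  have sm: "summable (\<lambda>i. (1/2::real)^i)" by (rule summable_geometric) simp
  have SN3: "summable (\<lambda>i. fN i p)" if "p \<in> S" for p
    by (rule series_C1(3)[OF Scvx fNd fNb fN'b sm fN'c]) (use that in auto)
  have SB3: "summable (\<lambda>i. fB i p)" if "p \<in> S" for p
    by (rule series_C1(3)[OF Scvx fBd fBb fB'b sm fB'c]) (use that in auto)
  define N where "N p = (\<Sum>i. fN i p)" for p
  define N' where "N' p v = (\<Sum>i. fN' i p v)" for p v
  define B where "B p = (\<Sum>i. fB i p)" for p
  define B' where "B' p v = (\<Sum>i. fB' i p v)" for p v
  define Dm where "Dm = {0..a+3} \<times> U"
  have DS: "Dm \<subseteq> S" by (auto simp: Dm_def S_def)
  have Nd: "(N has_derivative N' p) (at p within S)" if "p \<in> S" for p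
    unfolding N_def[abs_def] N'_def by (rule series_C1(1)[OF Scvx fNd fNb fN'b sm fN'c]) (use that in auto)
  have Bd: "(B has_derivative B' p) (at p within S)" if "p \<in> S" for p
    unfolding B_def[abs_def] B'_def by (rule series_C1(1)[OF Scvx fBd fBb fB'b sm fB'c]) (use that in auto)
  have Nc: "continuous_on S N"
    by (rule continuous_on_eq_continuous_within[THEN iffD2]) (use Nd has_derivative_continuous in blast)
  have Bc: "continuous_on S B"
    by (rule continuous_on_eq_continuous_within[THEN iffD2]) (use Bd has_derivative_continuous in blast)
  have N'c: "continuous_on S (\<lambda>p. N' p v)" for v unfolding N'_def by (rule series_C1(2)[OF Scvx fNd fNb fN'b sm fN'c]) auto
  have B'c: "continuous_on S (\<lambda>p. B' p v)" for v unfolding B'_def by (rule series_C1(2)[OF Scvx fBd fBb fB'b sm fB'c]) auto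
  have Bpos: "B p > 0" if pD: "p \<in> Dm" for p
  proof -
    have pS: "p \<in> S" using pD DS by auto
    have "snd p \<in> U" using pD by (auto simp: Dm_def)
    then obtain i where i: "snd p \<in> ball (yi i) (\<rho> (yi i))" using cover by blast
    have "bump (yi i) (r i) (snd p) > 0" using i r0[of i] by (intro bump_pos) (auto simp: r_def dist_commute)
    hence "fB i p > 0" using w0[of i] by (simp add: fB_def)
    moreover have "fB j p \<ge> 0" for j using w0[of j] bnd01[of j "snd p"] by (simp add: fB_def)
    ultimately show ?thesis unfolding B_def using SB3[OF pS] by (intro suminf_pos2) auto
  qed
  define \<Phi> where "\<Phi> p = N p / B p" for p
  define \<Phi>' where "\<Phi>' p v = (N' p v * B p - N p * B' p v) / (B p * B p)" for p v
  have \<Phi>d: "(\<Phi> has_derivative \<Phi>' p) (at p within Dm)" if "p \<in> Dm" for p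
  proof -
    have pS: "p \<in> S" using that DS by auto
    have "B p \<noteq> 0" using Bpos[OF that] by simp
    from has_derivative_divide'[OF Nd[OF pS] Bd[OF pS] this]
    have "(\<Phi> has_derivative \<Phi>' p) (at p within S)" unfolding \<Phi>_def[abs_def] \<Phi>'_def .
    thus ?thesis by (rule has_derivative_subset) (rule DS)
  qed
  have \<Phi>'c: "continuous_on Dm (\<lambda>p. \<Phi>' p v)" for v
  proof -
    have "\<forall>p\<in>Dm. B p * B p \<noteq> 0" using Bpos by (metis less_irrefl mult_pos_pos)
    thus ?thesis unfolding \<Phi>'_def
      by (intro continuous_intros continuous_on_subset[OF N'c DS] continuous_on_subset[OF B'c DS]
          continuous_on_subset[OF Nc DS] continuous_on_subset[OF Bc DS])
  qed
  have \<Phi>m: "\<Phi> (t, x) \<le> \<Phi> (s, x)" if "x \<in> U" "0 \<le> s" "s \<le> t" "t \<le> a+3" for x s t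
  proof -
    have ps: "(s, x) \<in> S" "(t, x) \<in> S" using that by (auto simp: S_def)
    have "N (t, x) \<le> N (s, x)" unfolding N_def
    proof (rule suminf_le[OF _ SN3[OF ps(2)] SN3[OF ps(1)]])
      fix i
      have "bump (yi i) (r i) x * c i t \<le> bump (yi i) (r i) x * c i s"
        using cmono[OF that(2,3)] bnd01[of i x] by (intro mult_left_mono) auto
      thus "fN i (t, x) \<le> fN i (s, x)" unfolding fN_def using w0[of i] by (intro mult_left_mono) auto
    qed
    moreover have "B (t, x) = B (s, x)" by (simp add: B_def fB_def)
    moreover have "B (s, x) > 0" using Bpos that by (auto simp: Dm_def)
    ultimately show ?thesis unfolding \<Phi>_def by (simp add: divide_right_mono)
  qed
  have \<Phi>a: "\<bar>\<Phi> (t, x) - \<phi> (t, x)\<bar> \<le> e" if x: "x \<in> U" and t: "t \<in> {a..a+2}" for x t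
  proof -
    define p where "p = (t, x)"
    have pS: "p \<in> S" and pD: "p \<in> Dm" using x t a by (auto simp: S_def Dm_def p_def)
    define tm where "tm i = fN i p - \<phi> p * fB i p" for i
    have tm_eq: "tm i = w i * bump (yi i) (r i) x * (c i t - \<phi> (t, x))" for i
      by (simp add: tm_def fN_def fB_def p_def algebra_simps)
    have tmb: "\<bar>tm i\<bar> \<le> e * fB i p" for i
    proof (cases "bump (yi i) (r i) x = 0")
      case True thus ?thesis using e by (simp add: tm_eq fB_def p_def)
    next
      case False
      hence "dist x (yi i) < r i" by (intro bump_supp r0)
      hence xb: "x \<in> ball (yi i) (\<rho> (yi i))" by (simp add: r_def dist_commute)
      have "\<bar>c i t - \<phi> (t, x)\<bar> \<le> e"
        using \<rho>\<phi>[OF yiU xb t] capp[OF t, of i] by linarith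
      hence "w i * bump (yi i) (r i) x * \<bar>c i t - \<phi> (t, x)\<bar> \<le> w i * bump (yi i) (r i) x * e"
        using w0[of i] bnd01[of i x] by (intro mult_left_mono) auto
      thus ?thesis using w0[of i] bnd01[of i x] by (simp add: tm_eq fB_def p_def abs_mult mult.commute mult.left_commute)
    qed
    have smB: "summable (\<lambda>i. e * fB i p)" using SB3[OF pS] by (rule summable_mult)
    have smt: "summable (\<lambda>i. norm (tm i))" by (rule summable_comparison_test[OF _ smB]) (use tmb in auto)
    have "N p - \<phi> p * B p = (\<Sum>i. tm i)"
      unfolding N_def B_def tm_def using SN3[OF pS] SB3[OF pS]
      by (simp add: suminf_diff summable_mult suminf_mult[symmetric])
    hence "\<bar>N p - \<phi> p * B p\<bar> \<le> (\<Sum>i. norm (tm i))" using summable_norm[OF smt] by simp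
    also have "\<dots> \<le> (\<Sum>i. e * fB i p)" by (rule suminf_le[OF _ smt smB]) (use tmb in auto)
    also have "\<dots> = e * B p" unfolding B_def using SB3[OF pS] by (rule suminf_mult)
    finally have "\<bar>N p - \<phi> p * B p\<bar> \<le> e * B p" .
    moreover have Bp: "B p > 0" using Bpos[OF pD] .
    moreover have "\<Phi> p - \<phi> p = (N p - \<phi> p * B p) / B p" using Bp by (simp add: \<Phi>_def field_simps)
    ultimately have "\<bar>\<Phi> p - \<phi> p\<bar> \<le> e" by (simp add: abs_divide pos_divide_le_eq)
    thus ?thesis by (simp add: p_def)
  qed
  show ?thesis
    apply (rule exI[of _ \<Phi>], rule exI[of _ \<Phi>'])
    using \<Phi>d \<Phi>'c \<Phi>m \<Phi>a unfolding Dm_def by blast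
qed



lemma within_open_eq: "open V \<Longrightarrow> p \<in> V \<Longrightarrow> at p within (S \<inter> V) = at p within S"
  by (rule at_within_nhd[of p V]) auto

lemma cont_local:
  fixes f :: "'a::metric_space \<Rightarrow> 'b::topological_space"
  assumes "\<And>p. p \<in> S \<Longrightarrow> \<exists>V. open V \<and> p \<in> V \<and> continuous_on (S \<inter> V) f"
  shows "continuous_on S f"
unfolding continuous_on_eq_continuous_within proof (intro ballI)
  fix p assume p: "p \<in> S"
  then obtain V where V: "open V" "p \<in> V" "continuous_on (S \<inter> V) f" using assms by blast
  hence "continuous (at p within S \<inter> V) f" using p by (simp add: continuous_on_eq_continuous_within)
  thus "continuous (at p within S) f" using within_open_eq[OF V(1,2)] by simp
qed

lemma deriv_local:
  assumes "(f has_derivative f') (at p within S \<inter> V)" "open V" "p \<in> V"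
  shows "(f has_derivative f') (at p within S)"
  using assms within_open_eq[OF assms(2,3), of S] by simp

lemma exp_half: "exp (1/2::real) \<le> 2"
proof -
  have "exp (1/2::real) * exp (1/2) = exp 1" by (simp add: exp_add[symmetric])
  also have "\<dots> \<le> 3" by (rule exp_le)
  finally have "exp (1/2::real) * exp (1/2) \<le> 3" .
  moreover have "exp (1/2::real) > 0" by simp
  ultimately show ?thesis
  proof (rule_tac ccontr)
    assume a: "exp (1/2::real) * exp (1/2) \<le> 3" "\<not> exp (1/2::real) \<le> 2"
    hence "2 * 2 < exp (1/2::real) * exp (1/2)" by (intro mult_strict_mono) auto
    thus False using a by simp
  qed
qed



lemma smooth_log:
  fixes \<phi> :: "real \<times> 'a::euclidean_space \<Rightarrow> real"
  assumes U: "open U" "U \<noteq> {}"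
    and \<phi>c: "continuous_on ({0..} \<times> U) \<phi>"
    and \<phi>m: "\<And>x s t. x \<in> U \<Longrightarrow> 0 \<le> s \<Longrightarrow> s \<le> t \<Longrightarrow> \<phi> (t, x) \<le> \<phi> (s, x)"
  shows "\<exists>\<psi> \<psi>'. (\<forall>p\<in>{0..} \<times> U. (\<psi> has_derivative \<psi>' p) (at p within {0..} \<times> U))
     \<and> (\<forall>v. continuous_on ({0..} \<times> U) (\<lambda>p. \<psi>' p v))
     \<and> (\<forall>x\<in>U. \<forall>s t. 0 \<le> s \<longrightarrow> s \<le> t \<longrightarrow> \<psi> (t, x) \<le> \<psi> (s, x))
     \<and> (\<forall>x\<in>U. \<forall>t. 0 \<le> t \<longrightarrow> \<bar>\<psi> (t, x) - \<phi> (t, x)\<bar> \<le> 1/2)"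
proof -
  have "\<forall>k::nat. \<exists>\<Phi> \<Phi>'. (\<forall>p \<in> {0..real k+3} \<times> U. (\<Phi> has_derivative \<Phi>' p) (at p within {0..real k+3} \<times> U))
     \<and> (\<forall>v. continuous_on ({0..real k+3} \<times> U) (\<lambda>p. \<Phi>' p v))
     \<and> (\<forall>x\<in>U. \<forall>s t. 0 \<le> s \<longrightarrow> s \<le> t \<longrightarrow> t \<le> real k+3 \<longrightarrow> \<Phi> (t, x) \<le> \<Phi> (s, x))
     \<and> (\<forall>x\<in>U. \<forall>t\<in>{real k..real k+2}. \<bar>\<Phi> (t, x) - \<phi> (t, x)\<bar> \<le> (1/8) * (1/2)^k)"
  proof
    fix k :: nat
    show "\<exists>\<Phi> \<Phi>'. (\<forall>p \<in> {0..real k+3} \<times> U. (\<Phi> has_derivative \<Phi>' p) (at p within {0..real k+3} \<times> U))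
     \<and> (\<forall>v. continuous_on ({0..real k+3} \<times> U) (\<lambda>p. \<Phi>' p v))
     \<and> (\<forall>x\<in>U. \<forall>s t. 0 \<le> s \<longrightarrow> s \<le> t \<longrightarrow> t \<le> real k+3 \<longrightarrow> \<Phi> (t, x) \<le> \<Phi> (s, x))
     \<and> (\<forall>x\<in>U. \<forall>t\<in>{real k..real k+2}. \<bar>\<Phi> (t, x) - \<phi> (t, x)\<bar> \<le> (1/8) * (1/2)^k)"
      by (rule layer[OF U \<phi>c \<phi>m]) auto
  qed
  then obtain L L' where LL: "\<And>k. (\<forall>p \<in> {0..real k+3} \<times> U. (L k has_derivative L' k p) (at p within {0..real k+3} \<times> U))
     \<and> (\<forall>v. continuous_on ({0..real k+3} \<times> U) (\<lambda>p. L' k p v))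
     \<and> (\<forall>x\<in>U. \<forall>s t. 0 \<le> s \<longrightarrow> s \<le> t \<longrightarrow> t \<le> real k+3 \<longrightarrow> L k (t, x) \<le> L k (s, x))
     \<and> (\<forall>x\<in>U. \<forall>t\<in>{real k..real k+2}. \<bar>L k (t, x) - \<phi> (t, x)\<bar> \<le> (1/8) * (1/2)^k)"
    by metis
  have Ld: "\<And>k p. p \<in> {0..real k+3} \<times> U \<Longrightarrow> (L k has_derivative L' k p) (at p within {0..real k+3} \<times> U)"
    using LL by blast
  have Lc: "\<And>k v. continuous_on ({0..real k+3} \<times> U) (\<lambda>p. L' k p v)" using LL by blast
  have Lm: "\<And>k x s t. x \<in> U \<Longrightarrow> 0 \<le> s \<Longrightarrow> s \<le> t \<Longrightarrow> t \<le> real k+3 \<Longrightarrow> L k (t, x) \<le> L k (s, x)"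
    using LL by blast
  have La: "\<And>k x t. x \<in> U \<Longrightarrow> t \<in> {real k..real k+2} \<Longrightarrow> \<bar>L k (t, x) - \<phi> (t, x)\<bar> \<le> (1/8) * (1/2)^k"
    using LL by blast
  define \<Phi> where "\<Phi> k p = L k p + (3/8) * (1/2)^k" for k p
  have \<Phi>app: "\<bar>\<Phi> k (t, x) - \<phi> (t, x)\<bar> \<le> 1/2" if "x \<in> U" "t \<in> {real k..real k+2}" for k x t
  proof -
    have q: "(1/2::real)^k \<le> 1" "(1/2::real)^k \<ge> 0" by (auto intro: power_le_one)
    have l: "\<bar>L k (t, x) - \<phi> (t, x)\<bar> \<le> (1/8) * (1/2)^k" using La[OF that] .
    from abs_le_D1[OF l] abs_le_D2[OF l] q show ?thesis unfolding \<Phi>_def by (intro abs_leI) linarith+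
  qed
  have \<Phi>ov: "\<Phi> (Suc k) (t, x) \<le> \<Phi> k (t, x)" if "x \<in> U" "t \<in> {real k+1..real k+2}" for k x t
  proof -
    have t1: "t \<in> {real k..real k+2}" "t \<in> {real (Suc k)..real (Suc k)+2}" using that by auto
    have "\<bar>L (Suc k) (t, x) - \<phi> (t, x)\<bar> \<le> (1/8) * ((1/2)^k / 2)" using La[OF that(1) t1(2)] by simp
    moreover have "\<bar>L k (t, x) - \<phi> (t, x)\<bar> \<le> (1/8) * (1/2)^k" using La[OF that(1) t1(1)] .
    ultimately have "L (Suc k) (t, x) - \<phi> (t, x) \<le> (1/8) * ((1/2)^k / 2)" "- (L k (t, x) - \<phi> (t, x)) \<le> (1/8) * (1/2)^k"
      using abs_le_D1 abs_le_D2 by blast+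
    thus ?thesis unfolding \<Phi>_def by simp
  qed
  have \<Phi>d: "(\<Phi> k has_derivative L' k p) (at p within {0..real k+3} \<times> U)" if "p \<in> {0..real k+3} \<times> U" for k p
    unfolding \<Phi>_def[abs_def] by (rule has_derivative_add_const[OF Ld[OF that]])
  have \<Phi>c: "continuous_on ({0..real k+3} \<times> U) (\<Phi> k)" for k
    by (rule continuous_on_eq_continuous_within[THEN iffD2]) (use \<Phi>d has_derivative_continuous in blast)
  have \<Phi>m: "\<Phi> k (t, x) \<le> \<Phi> k (s, x)" if "x \<in> U" "0 \<le> s" "s \<le> t" "t \<le> real k+3" for k x s t
    using Lm[OF that] unfolding \<Phi>_def by simp
  define Hf where "Hf n p = (1 - ss (fst p - real n)) * \<Phi> (n - 1) p + ss (fst p - real n) * \<Phi> n p" for n p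
  define Hf' where "Hf' n p v = (1 - ss (fst p - real n)) * L' (n - 1) p v + (- (ss' (fst p - real n) * fst v)) * \<Phi> (n - 1) p
      + (ss (fst p - real n) * L' n p v + (ss' (fst p - real n) * fst v) * \<Phi> n p)" for n p v
  define nf where "nf t = nat \<lfloor>t\<rfloor>" for t :: real
  define \<psi> where "\<psi> p = Hf (nf (fst p)) p" for p
  define \<psi>' where "\<psi>' p = Hf' (nf (fst p)) p" for p
  have nf_eq: "nf t = n" if "real n \<le> t" "t < real n + 1" for n t
  proof -
    have "\<lfloor>t\<rfloor> = int n" using that by (simp add: floor_eq_iff)
    thus ?thesis by (simp add: nf_def)
  qed
  have loc: "\<psi> p = Hf n p \<and> \<psi>' p = Hf' n p" if "fst p \<ge> 0" "real n - 1/3 < fst p" "fst p < real n + 1" for n p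
  proof (cases "real n \<le> fst p")
    case True
    thus ?thesis using nf_eq[OF True that(3)] by (simp add: \<psi>_def \<psi>'_def)
  next
    case False
    hence n1: "n \<ge> 1" using that(1) by (cases n) auto
    hence rn: "real (n - 1) = real n - 1" by (simp add: of_nat_diff)
    have "real (n - 1) \<le> fst p" "fst p < real (n - 1) + 1" using rn False that(2) by linarith+
    hence nfe: "nf (fst p) = n - 1" by (rule nf_eq)
    have "fst p - real (n - 1) \<ge> 2/3" using rn that(2) by linarith
    hence s1: "ss (fst p - real (n - 1)) = 1 \<and> ss' (fst p - real (n - 1)) = 0" by (rule ss_high)
    have s0: "ss (fst p - real n) = 0 \<and> ss' (fst p - real n) = 0" using False by (intro ss_low) simp
    show ?thesis using s1 s0 nfe
      by (auto simp: \<psi>_def \<psi>'_def Hf_def Hf'_def fun_eq_iff)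
  qed
  define Wn where "Wn n = {0..real n + 2} \<times> U" for n
  have Wsub: "Wn n \<subseteq> {0..real (n - 1) + 3} \<times> U" "Wn n \<subseteq> {0..real n + 3} \<times> U" for n
    by (auto simp: Wn_def of_nat_diff)
  have ssd: "((\<lambda>p. ss (fst p - real n)) has_derivative (\<lambda>v. ss' (fst p - real n) * fst v)) (at p within T)" for n p and T :: "(real \<times> 'a) set"
  proof -
    have "((\<lambda>p. fst p - real n) has_derivative (\<lambda>v. fst v)) (at p within T)"
      using has_derivative_diff[OF has_derivative_fst[OF has_derivative_ident] has_derivative_const[of "real n"]] by simp
    from has_derivative_compose[OF this ss_deriv[unfolded has_field_derivative_def]] show ?thesis by simp
  qed
  have Hd: "(Hf n has_derivative Hf' n p) (at p within Wn n)" if "p \<in> Wn n" for n p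
  proof -
    have d1: "(\<Phi> (n - 1) has_derivative L' (n - 1) p) (at p within Wn n)"
      by (rule has_derivative_subset[OF \<Phi>d Wsub(1)]) (use that Wsub(1) in auto)
    have d2: "(\<Phi> n has_derivative L' n p) (at p within Wn n)"
      by (rule has_derivative_subset[OF \<Phi>d Wsub(2)]) (use that Wsub(2) in auto)
    have d3: "((\<lambda>p. 1 - ss (fst p - real n)) has_derivative (\<lambda>v. 0 - ss' (fst p - real n) * fst v)) (at p within Wn n)"
      by (rule has_derivative_diff[OF has_derivative_const ssd])
    from has_derivative_add[OF has_derivative_mult[OF d3 d1] has_derivative_mult[OF ssd d2]]
    show ?thesis unfolding Hf_def[abs_def] Hf'_def
      by (rule has_derivative_eq_rhs) (simp add: fun_eq_iff algebra_simps)
  qed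
  have Hc: "continuous_on (Wn n) (\<lambda>p. Hf' n p v)" for n v
  proof -
    have c1: "continuous_on (Wn n) (\<lambda>p. L' (n - 1) p v)" by (rule continuous_on_subset[OF Lc Wsub(1)])
    have c2: "continuous_on (Wn n) (\<lambda>p. L' n p v)" by (rule continuous_on_subset[OF Lc Wsub(2)])
    have c3: "continuous_on (Wn n) (\<Phi> (n - 1))" by (rule continuous_on_subset[OF \<Phi>c Wsub(1)])
    have c4: "continuous_on (Wn n) (\<Phi> n)" by (rule continuous_on_subset[OF \<Phi>c Wsub(2)])
    have c5: "continuous_on (Wn n) (\<lambda>p. ss (fst p - real n))"
      by (rule continuous_on_compose2[OF ss_cont(2)]) (auto intro!: continuous_intros)
    have c6: "continuous_on (Wn n) (\<lambda>p. ss' (fst p - real n))"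
      by (rule continuous_on_compose2[OF ss_cont(1)]) (auto intro!: continuous_intros)
    show ?thesis unfolding Hf'_def by (intro continuous_intros c1 c2 c3 c4 c5 c6)
  qed
  define W0 where "W0 = {0::real..} \<times> U"
  have fl: "real (nf t) \<le> t \<and> t < real (nf t) + 1" if "t \<ge> 0" for t
  proof -
    have "\<lfloor>t\<rfloor> \<ge> 0" using that by simp
    hence "real (nf t) = of_int \<lfloor>t\<rfloor>" by (simp add: nf_def)
    thus ?thesis by (simp add: of_int_floor_le real_of_int_floor_add_one_gt)
  qed
  define Vn where "Vn n = {real n - 1/3 <..< real n + 1} \<times> (UNIV :: 'a set)" for n
  have Vo: "open (Vn n)" for n unfolding Vn_def by (intro open_Times open_greaterThanLessThan open_UNIV)
  have pV: "p \<in> Vn (nf (fst p))" if "p \<in> W0" for p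
    using fl[of "fst p"] that by (auto simp: Vn_def W0_def)
  have WVsub: "W0 \<inter> Vn n \<subseteq> Wn n" for n by (auto simp: W0_def Vn_def Wn_def)
  have locW: "\<psi> q = Hf n q \<and> \<psi>' q = Hf' n q" if "q \<in> W0 \<inter> Vn n" for q n
    using that by (intro loc) (auto simp: W0_def Vn_def)
  have \<psi>d: "(\<psi> has_derivative \<psi>' p) (at p within W0)" if pW: "p \<in> W0" for p
  proof -
    define n where "n = nf (fst p)"
    have pWV: "p \<in> W0 \<inter> Vn n" using pV[OF pW] pW by (simp add: n_def)
    have "(Hf n has_derivative Hf' n p) (at p within W0 \<inter> Vn n)"
      by (rule has_derivative_subset[OF Hd WVsub]) (use pWV WVsub in auto)
    hence "(\<psi> has_derivative Hf' n p) (at p within W0 \<inter> Vn n)"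
      by (rule has_derivative_transform_within[OF _ zero_less_one pWV]) (use locW in auto)
    hence "(\<psi> has_derivative \<psi>' p) (at p within W0 \<inter> Vn n)" using locW[OF pWV] by simp
    thus ?thesis by (rule deriv_local[OF _ Vo]) (use pWV in auto)
  qed
  have \<psi>'c: "continuous_on W0 (\<lambda>p. \<psi>' p v)" for v
  proof (rule cont_local)
    fix p assume pW: "p \<in> W0"
    define n where "n = nf (fst p)"
    have "continuous_on (W0 \<inter> Vn n) (\<lambda>q. Hf' n q v)" by (rule continuous_on_subset[OF Hc WVsub])
    hence "continuous_on (W0 \<inter> Vn n) (\<lambda>q. \<psi>' q v)" by (rule continuous_on_eq) (use locW in auto)
    thus "\<exists>V. open V \<and> p \<in> V \<and> continuous_on (W0 \<inter> V) (\<lambda>q. \<psi>' q v)"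
      using Vo[of n] pV[OF pW] by (auto simp: n_def)
  qed
  have Hmono: "Hf n (t, x) \<le> Hf n (s, x)" if x: "x \<in> U" and st: "real n \<le> s" "s \<le> t" "t \<le> real n + 1" for n s t x
  proof -
    define A where "A r = \<Phi> (n - 1) (r, x)" for r
    define B where "B r = \<Phi> n (r, x)" for r
    have s0: "s \<ge> 0" using st by simp
    have tA: "t \<le> real (n - 1) + 3" using st by (cases n) auto
    have At: "A t \<le> A s" unfolding A_def by (rule \<Phi>m[OF x s0 st(2) tA])
    have Bt: "B t \<le> B s" unfolding B_def by (rule \<Phi>m[OF x s0 st(2)]) (use st in auto)
    have BA: "B s \<le> A s"
    proof (cases n)
      case 0 thus ?thesis by (simp add: A_def B_def)
    next
      case (Suc k)
      have "s \<in> {real k + 1..real k + 2}" using st Suc by auto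
      from \<Phi>ov[OF x this] show ?thesis using Suc by (simp add: A_def B_def)
    qed
    define \<sigma>s where "\<sigma>s = ss (s - real n)"
    define \<sigma>t where "\<sigma>t = ss (t - real n)"
    have \<sigma>: "0 \<le> \<sigma>s" "\<sigma>s \<le> \<sigma>t" "\<sigma>t \<le> 1" using ss_range ss_mono[of "s - real n" "t - real n"] st
      by (auto simp: \<sigma>s_def \<sigma>t_def)
    have "Hf n (t, x) = (1 - \<sigma>t) * A t + \<sigma>t * B t" by (simp add: Hf_def A_def B_def \<sigma>t_def)
    also have "\<dots> \<le> (1 - \<sigma>t) * A s + \<sigma>t * B s"
      using \<sigma> At Bt by (intro add_mono mult_left_mono) auto
    also have "\<dots> = A s - \<sigma>t * (A s - B s)" by (simp add: algebra_simps)
    also have "\<dots> \<le> A s - \<sigma>s * (A s - B s)" using \<sigma> BA by (intro diff_left_mono mult_right_mono) auto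
    also have "\<dots> = Hf n (s, x)" by (simp add: Hf_def A_def B_def \<sigma>s_def algebra_simps)
    finally show ?thesis .
  qed
  have \<psi>H: "\<psi> (t, x) = Hf n (t, x)" if "real n \<le> t" "t \<le> real n + 1" for n t x
  proof (cases "t < real n + 1")
    case True thus ?thesis using loc[of "(t, x)" n] that by auto
  next
    case False
    hence t: "t = real (Suc n)" using that by simp
    have "nf t = Suc n" using t by (intro nf_eq) auto
    hence "\<psi> (t, x) = \<Phi> n (t, x)" using ss_low[of 0] t by (simp add: \<psi>_def Hf_def)
    also have "\<dots> = Hf n (t, x)" using ss_high[of 1] t by (simp add: Hf_def)
    finally show ?thesis .
  qed
  have \<psi>mono_n: "\<psi> (t, x) \<le> \<psi> (s, x)" if "x \<in> U" "real n \<le> s" "s \<le> t" "t \<le> real n + 1" for n s t x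
    using Hmono[OF that] \<psi>H[of n t x] \<psi>H[of n s x] that by simp
  have \<psi>mono_m: "\<forall>s t. 0 \<le> s \<longrightarrow> s \<le> t \<longrightarrow> t \<le> real m \<longrightarrow> \<psi> (t, x) \<le> \<psi> (s, x)" if x: "x \<in> U" for m x
  proof (induction m)
    case 0
    show ?case
    proof (intro allI impI)
      fix s t :: real assume "0 \<le> s" "s \<le> t" "t \<le> real 0"
      hence "s = t" by simp
      thus "\<psi> (t, x) \<le> \<psi> (s, x)" by simp
    qed
  next
    case (Suc m)
    show ?case
    proof (intro allI impI)
      fix s t :: real assume st: "0 \<le> s" "s \<le> t" "t \<le> real (Suc m)"
      show "\<psi> (t, x) \<le> \<psi> (s, x)"
      proof (cases "t \<le> real m")
        case True thus ?thesis using Suc.IH st by blast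
      next
        case False
        show ?thesis
        proof (cases "real m \<le> s")
          case True thus ?thesis using \<psi>mono_n[OF x True st(2)] st by simp
        next
          case False2: False
          have "\<psi> (t, x) \<le> \<psi> (real m, x)" using \<psi>mono_n[OF x order_refl] False st by simp
          also have "\<dots> \<le> \<psi> (s, x)" using Suc.IH st False2 by simp
          finally show ?thesis .
        qed
      qed
    qed
  qed
  have \<psi>mono: "\<psi> (t, x) \<le> \<psi> (s, x)" if "x \<in> U" "0 \<le> s" "s \<le> t" for x s t
  proof -
    have "t \<le> real (nat \<lceil>t\<rceil>)" by linarith
    thus ?thesis using \<psi>mono_m[OF that(1), of "nat \<lceil>t\<rceil>"] that by blast
  qed
  have \<psi>app: "\<bar>\<psi> (t, x) - \<phi> (t, x)\<bar> \<le> 1/2" if x: "x \<in> U" and t: "0 \<le> t" for x t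
  proof -
    define n where "n = nf t"
    have tn: "real n \<le> t" "t < real n + 1" using fl[OF t] by (auto simp: n_def)
    have tA: "t \<in> {real (n - 1)..real (n - 1) + 2}" using tn by (cases n) auto
    have tB: "t \<in> {real n..real n + 2}" using tn by auto
    have a1: "\<bar>\<Phi> (n - 1) (t, x) - \<phi> (t, x)\<bar> \<le> 1/2" by (rule \<Phi>app[OF x tA])
    have a2: "\<bar>\<Phi> n (t, x) - \<phi> (t, x)\<bar> \<le> 1/2" by (rule \<Phi>app[OF x tB])
    define \<sigma> where "\<sigma> = ss (t - real n)"
    have \<sigma>: "0 \<le> \<sigma>" "\<sigma> \<le> 1" using ss_range by (auto simp: \<sigma>_def)
    have "\<psi> (t, x) - \<phi> (t, x) = (1 - \<sigma>) * (\<Phi> (n - 1) (t, x) - \<phi> (t, x)) + \<sigma> * (\<Phi> n (t, x) - \<phi> (t, x))"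
      by (simp add: \<psi>_def Hf_def n_def \<sigma>_def algebra_simps)
    also have "\<bar>\<dots>\<bar> \<le> (1 - \<sigma>) * \<bar>\<Phi> (n - 1) (t, x) - \<phi> (t, x)\<bar> + \<sigma> * \<bar>\<Phi> n (t, x) - \<phi> (t, x)\<bar>"
      using \<sigma> by (metis (no_types, lifting) abs_mult abs_of_nonneg abs_triangle_ineq diff_ge_0_iff_ge)
    also have "\<dots> \<le> (1 - \<sigma>) * (1/2) + \<sigma> * (1/2)" using \<sigma> a1 a2 by (intro add_mono mult_left_mono) auto
    also have "\<dots> = 1/2" by (simp add: field_simps)
    finally show ?thesis .
  qed
  show ?thesis
    apply (rule exI[of _ \<psi>], rule exI[of _ \<psi>'])
    using \<psi>d \<psi>'c \<psi>mono \<psi>app unfolding W0_def by blast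
qed



theorem lemma4:
  fixes h :: "real \<Rightarrow> 'a::euclidean_space \<Rightarrow> real" and K :: "'a set"
  assumes h_cont: "continuous_on ({0..} \<times> UNIV) (\<lambda>(t, x). h t x)"
    and h_nonneg: "\<And>t x. t \<ge> 0 \<Longrightarrow> h t x \<ge> 0"
    and K_closed: "closed K"
    and h_zero: "\<And>t x. t \<ge> 0 \<Longrightarrow> h t x = 0 \<longleftrightarrow> x \<in> K"
    and h_mono: "\<And>x s t. 0 \<le> s \<Longrightarrow> s \<le> t \<Longrightarrow> h t x \<le> h s x"
  shows "\<exists>g :: real \<Rightarrow> 'a \<Rightarrow> real.
           continuous_on ({0..} \<times> UNIV) (\<lambda>(t, x). g t x)
         \<and> (\<forall>t x. t \<ge> 0 \<longrightarrow> g t x \<ge> 0)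
         \<and> (\<exists>g' :: real \<times> 'a \<Rightarrow> (real \<times> 'a) \<Rightarrow>\<^sub>L real.
               (\<forall>p \<in> {0..} \<times> (UNIV - K).
                  ((\<lambda>(t, x). g t x) has_derivative blinfun_apply (g' p))
                    (at p within {0..} \<times> (UNIV - K)))
             \<and> continuous_on ({0..} \<times> (UNIV - K)) g')
         \<and> (\<forall>t x. t \<ge> 0 \<longrightarrow> h t x / 2 \<le> g t x \<and> g t x \<le> 2 * h t x)
         \<and> (\<forall>x s t. 0 \<le> s \<longrightarrow> s \<le> t \<longrightarrow> g t x \<le> g s x)"
proof (cases "UNIV - K = {}")
  case True
  hence K: "x \<in> K" for x by auto
  show ?thesis
  proof (intro exI[of _ "\<lambda>t x. 0"] conjI allI impI)
    show "\<exists>g' :: real \<times> 'a \<Rightarrow> (real \<times> 'a) \<Rightarrow>\<^sub>L real.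
               (\<forall>p \<in> {0..} \<times> (UNIV - K).
                  ((\<lambda>(t, x). (\<lambda>t x. 0::real) t x) has_derivative blinfun_apply (g' p))
                    (at p within {0..} \<times> (UNIV - K)))
             \<and> continuous_on ({0..} \<times> (UNIV - K)) g'"
      by (rule exI[of _ "\<lambda>p. 0"]) (simp add: True)
    fix t :: real and x assume "t \<ge> 0"
    hence "h t x = 0" using h_zero K by blast
    thus "h t x / 2 \<le> 0" "0 \<le> 2 * h t x" by simp_all
  qed auto
next
  case False
  define U where "U = UNIV - K"
  have Uo: "open U" unfolding U_def using K_closed by (simp add: open_Diff)
  have Une: "U \<noteq> {}" using False by (simp add: U_def)
  have hpos: "h t x > 0" if "t \<ge> 0" "x \<in> U" for t x
    using h_nonneg[OF that(1), of x] h_zero[OF that(1), of x] that(2) by (auto simp: U_def)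
  define \<phi> where "\<phi> p = ln (h (fst p) (snd p))" for p
  have hc: "continuous_on ({0..} \<times> UNIV) (\<lambda>p. h (fst p) (snd p))"
    using h_cont by (simp add: case_prod_unfold)
  have \<phi>c: "continuous_on ({0..} \<times> U) \<phi>"
    unfolding \<phi>_def
  proof (intro continuous_on_ln continuous_on_subset[OF hc] ballI)
    fix p :: "real \<times> 'a" assume "p \<in> {0..} \<times> U"
    thus "h (fst p) (snd p) \<noteq> 0" using hpos[of "fst p" "snd p"] by auto
  qed auto
  have \<phi>m: "\<phi> (t, x) \<le> \<phi> (s, x)" if "x \<in> U" "0 \<le> s" "s \<le> t" for x s t
    using h_mono[OF that(2,3), of x] hpos[of t x] hpos[of s x] that by (simp add: \<phi>_def)
  obtain \<psi> \<psi>' where \<psi>all: "(\<forall>p\<in>{0..} \<times> U. (\<psi> has_derivative \<psi>' p) (at p within {0..} \<times> U))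
     \<and> (\<forall>v. continuous_on ({0..} \<times> U) (\<lambda>p. \<psi>' p v))
     \<and> (\<forall>x\<in>U. \<forall>s t. 0 \<le> s \<longrightarrow> s \<le> t \<longrightarrow> \<psi> (t, x) \<le> \<psi> (s, x))
     \<and> (\<forall>x\<in>U. \<forall>t. 0 \<le> t \<longrightarrow> \<bar>\<psi> (t, x) - \<phi> (t, x)\<bar> \<le> 1/2)"
    using smooth_log[OF Uo Une \<phi>c \<phi>m] by blast
  have \<psi>d: "\<And>p. p \<in> {0..} \<times> U \<Longrightarrow> (\<psi> has_derivative \<psi>' p) (at p within {0..} \<times> U)"
    using \<psi>all by blast
  have \<psi>'c: "\<And>v. continuous_on ({0..} \<times> U) (\<lambda>p. \<psi>' p v)" using \<psi>all by blast
  have \<psi>m: "\<And>x s t. x \<in> U \<Longrightarrow> 0 \<le> s \<Longrightarrow> s \<le> t \<Longrightarrow> \<psi> (t, x) \<le> \<psi> (s, x)" using \<psi>all by blast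
  have \<psi>a: "\<And>x t. x \<in> U \<Longrightarrow> 0 \<le> t \<Longrightarrow> \<bar>\<psi> (t, x) - \<phi> (t, x)\<bar> \<le> 1/2" using \<psi>all by blast
  define W0 where "W0 = {0::real..} \<times> U"
  define D where "D = {0::real..} \<times> (UNIV :: 'a set)"
  define g where "g t x = (if x \<in> K then 0 else exp (\<psi> (t, x)))" for t x
  define g' where "g' p = Blinfun (\<lambda>v. exp (\<psi> p) * \<psi>' p v)" for p
  have e1: "((\<lambda>p. exp (\<psi> p)) has_derivative (\<lambda>v. exp (\<psi> p) * \<psi>' p v)) (at p within W0)" if "p \<in> W0" for p
    using has_derivative_compose[OF \<psi>d[OF that[unfolded W0_def]] DERIV_exp[unfolded has_field_derivative_def]]
    by (simp add: W0_def)
  have g'eq: "blinfun_apply (g' p) = (\<lambda>v. exp (\<psi> p) * \<psi>' p v)" if "p \<in> W0" for p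
    unfolding g'_def by (rule bounded_linear_Blinfun_apply[OF has_derivative_bounded_linear[OF e1[OF that]]])
  have geq: "(\<lambda>(t, x). g t x) q = exp (\<psi> q)" if "q \<in> W0" for q
    using that by (auto simp: W0_def U_def g_def case_prod_unfold)
  have gd: "((\<lambda>(t, x). g t x) has_derivative blinfun_apply (g' p)) (at p within W0)" if p: "p \<in> W0" for p
    unfolding g'eq[OF p]
    by (rule has_derivative_transform_within[OF e1[OF p] zero_less_one p]) (use geq in auto)
  have \<psi>c: "continuous_on W0 \<psi>"
    by (rule continuous_on_eq_continuous_within[THEN iffD2]) (use \<psi>d has_derivative_continuous W0_def in blast)
  have g'c: "continuous_on W0 g'"
  proof (rule continuous_on_blinfun_componentwise)
    fix i :: "real \<times> 'a"
    have "continuous_on W0 (\<lambda>p. exp (\<psi> p) * \<psi>' p i)"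
      using \<psi>c \<psi>'c[of i] unfolding W0_def by (intro continuous_intros) auto
    thus "continuous_on W0 (\<lambda>p. blinfun_apply (g' p) i)" by (rule continuous_on_eq) (use g'eq in auto)
  qed
  have gc: "continuous_on D (\<lambda>(t, x). g t x)"
    unfolding continuous_on_eq_continuous_within
  proof (intro ballI)
    fix p assume pD: "p \<in> D"
    show "continuous (at p within D) (\<lambda>(t, x). g t x)"
    proof (cases "snd p \<in> K")
      case False
      hence pW: "p \<in> W0" using pD by (auto simp: D_def W0_def U_def)
      have "continuous (at p within W0) (\<lambda>p. exp (\<psi> p))" by (rule has_derivative_continuous[OF e1[OF pW]])
      hence c: "continuous (at p within W0) (\<lambda>(t, x). g t x)"
        by (rule continuous_transform_within[OF _ zero_less_one pW]) (use geq in auto)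
      have Vo: "open (UNIV \<times> U)" using Uo by (intro open_Times) auto
      have pV: "p \<in> UNIV \<times> U" using False by (cases p) (auto simp: U_def)
      have "D \<inter> (UNIV \<times> U) = W0" by (auto simp: D_def W0_def)
      hence "at p within D = at p within W0" using within_open_eq[OF Vo pV, of D] by simp
      thus ?thesis using c by simp
    next
      case True
      have t0: "fst p \<ge> 0" using pD by (auto simp: D_def)
      have gp: "(\<lambda>(t, x). g t x) p = 0" using True by (simp add: g_def case_prod_unfold)
      have hp: "h (fst p) (snd p) = 0" using h_zero[OF t0] True by simp
      have "((\<lambda>q. h (fst q) (snd q)) \<longlongrightarrow> h (fst p) (snd p)) (at p within D)"
        using hc pD unfolding D_def continuous_on_def by (cases p) auto
      hence hl: "((\<lambda>q. 2 * h (fst q) (snd q)) \<longlongrightarrow> 0) (at p within D)" using hp tendsto_mult_left[of _ 0 _ 2] by fastforce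
      have bnds: "0 \<le> (\<lambda>(t, x). g t x) q \<and> (\<lambda>(t, x). g t x) q \<le> 2 * h (fst q) (snd q)" if "q \<in> D" for q
      proof (cases "snd q \<in> K")
        case True
        have "fst q \<ge> 0" using that by (auto simp: D_def)
        thus ?thesis using True h_nonneg by (simp add: g_def case_prod_unfold)
      next
        case False
        have q0: "fst q \<ge> 0" and qU: "snd q \<in> U" using that False by (auto simp: D_def U_def)
        have hq: "h (fst q) (snd q) > 0" by (rule hpos[OF q0 qU])
        have "\<psi> (fst q, snd q) \<le> \<phi> (fst q, snd q) + 1/2" using \<psi>a[OF qU q0] by linarith
        hence "exp (\<psi> (fst q, snd q)) \<le> exp (\<phi> (fst q, snd q) + 1/2)" by simp
        also have "\<dots> = h (fst q) (snd q) * exp (1/2)" using hq by (simp add: \<phi>_def exp_add)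
        also have "\<dots> \<le> h (fst q) (snd q) * 2" using hq exp_half by (intro mult_left_mono) auto
        finally show ?thesis using False by (simp add: g_def case_prod_unfold mult.commute)
      qed
      have "((\<lambda>(t, x). g t x) \<longlongrightarrow> 0) (at p within D)"
      proof (rule tendsto_sandwich[OF _ _ tendsto_const hl])
        show "\<forall>\<^sub>F q in at p within D. 0 \<le> (\<lambda>(t, x). g t x) q"
          using bnds by (auto simp: eventually_at_filter)
        show "\<forall>\<^sub>F q in at p within D. (\<lambda>(t, x). g t x) q \<le> 2 * h (fst q) (snd q)"
          using bnds by (auto simp: eventually_at_filter)
      qed
      thus ?thesis using gp by (simp add: continuous_within)
    qed
  qed
  have gb: "h t x / 2 \<le> g t x \<and> g t x \<le> 2 * h t x" if t0: "t \<ge> 0" for t x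
  proof (cases "x \<in> K")
    case True hence "h t x = 0" using h_zero[OF t0] by blast
    thus ?thesis using True by (simp add: g_def)
  next
    case False
    hence xU: "x \<in> U" by (simp add: U_def)
    have hq: "h t x > 0" by (rule hpos[OF t0 xU])
    have a: "\<bar>\<psi> (t, x) - \<phi> (t, x)\<bar> \<le> 1/2" by (rule \<psi>a[OF xU t0])
    have hx: "h t x = exp (\<phi> (t, x))" using hq by (simp add: \<phi>_def)
    have a1: "\<psi> (t, x) \<le> \<phi> (t, x) + 1/2" and a2: "\<phi> (t, x) - 1/2 \<le> \<psi> (t, x)"
      using abs_le_D1[OF a] abs_le_D2[OF a] by linarith+
    have "exp (\<psi> (t, x)) \<le> exp (\<phi> (t, x) + 1/2)" using a1 by simp
    also have "\<dots> = h t x * exp (1/2)" using hx by (simp add: exp_add)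
    also have "\<dots> \<le> h t x * 2" using hq exp_half by (intro mult_left_mono) auto
    finally have up: "exp (\<psi> (t, x)) \<le> 2 * h t x" by simp
    have "h t x = exp (\<phi> (t, x) - 1/2) * exp (1/2)" using hx by (simp add: exp_diff)
    also have "\<dots> \<le> exp (\<psi> (t, x)) * 2" using a2 exp_half by (intro mult_mono) auto
    finally have lo: "h t x / 2 \<le> exp (\<psi> (t, x))" by simp
    show ?thesis using up lo False by (simp add: g_def)
  qed
  have gm: "g t x \<le> g s x" if "0 \<le> s" "s \<le> t" for x s t
  proof (cases "x \<in> K")
    case True thus ?thesis by (simp add: g_def)
  next
    case False
    hence "x \<in> U" by (simp add: U_def)
    thus ?thesis using \<psi>m[OF _ that] False by (simp add: g_def)
  qed
  have gn: "g t x \<ge> 0" for t x by (simp add: g_def)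
  show ?thesis
  proof (intro exI[of _ g] conjI allI impI)
    show "continuous_on ({0..} \<times> UNIV) (\<lambda>(t, x). g t x)" using gc by (simp add: D_def)
    show "\<exists>g' :: real \<times> 'a \<Rightarrow> (real \<times> 'a) \<Rightarrow>\<^sub>L real.
               (\<forall>p \<in> {0..} \<times> (UNIV - K).
                  ((\<lambda>(t, x). g t x) has_derivative blinfun_apply (g' p))
                    (at p within {0..} \<times> (UNIV - K)))
             \<and> continuous_on ({0..} \<times> (UNIV - K)) g'"
      using gd g'c unfolding W0_def U_def by blast
  qed (use gn gb gm in auto)
qed


end
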